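(* For every integer $s \ge 2$, $R(s,s) \le s$ and $R(s,s) \ge p$, where $p$ is the smallest prime factor of $s$. Moreover, if $s$ is even then $R(s,s)=2$.
   Context: Let $Z_s$ be the ring of integers modulo $s$. A family $\mathcal{F} \subseteq Z_s^q$ is covering if for every ordered pair of distinct vectors $u,v \in \mathcal{F}$ and every $a \in Z_s$ there is a coordinate $i$ with $u_i - v_i = a$. $R(s,q)$ denotes the maximum possible cardinality of a covering family in $Z_s^q$. *)

theory Defs
  imports Main "HOL-Library.FuncSet" "HOL-Computational_Algebra.Primes"
begin

text \<open>Vectors of Z_s^q: functions on coordinates {0..<q} with values in {0..<s}
  (representatives of Z_s), extensional outside {0..<q}.\<close>
definition vecs :: "nat \<Rightarrow> nat \<Rightarrow> (nat \<Rightarrow> nat) set" where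
  "vecs s q = {0..<q} \<rightarrow>\<^sub>E {0..<s}"

definition covering :: "nat \<Rightarrow> nat \<Rightarrow> (nat \<Rightarrow> nat) set \<Rightarrow> bool" where
  "covering s q F \<longleftrightarrow> F \<subseteq> vecs s q \<and>
     (\<forall>u\<in>F. \<forall>v\<in>F. u \<noteq> v \<longrightarrow>
        (\<forall>a\<in>{0..<s}. \<exists>i\<in>{0..<q}. (int (u i) - int (v i)) mod int s = int a))"

definition R :: "nat \<Rightarrow> nat \<Rightarrow> nat" where
  "R s q = Max {card F | F. covering s q F}"

end

theory Submission
  imports Defs "HOL-Number_Theory.Number_Theory"
begin

lemma diff_img:
  assumes cov: "covering s s F" and s: "s \<ge> 2" and u: "u \<in> F" and v: "v \<in> F" and uv: "u \<noteq> v"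
  shows "(\<lambda>i. (int (u i) - int (v i)) mod int s) ` {0..<s} = int ` {0..<s}"
proof
  show "(\<lambda>i. (int (u i) - int (v i)) mod int s) ` {0..<s} \<subseteq> int ` {0..<s}"
  proof
    fix x assume "x \<in> (\<lambda>i. (int (u i) - int (v i)) mod int s) ` {0..<s}"
    then obtain i where x: "x = (int (u i) - int (v i)) mod int s" by (rule imageE)
    have sp: "int s > 0" using s by simp
    have "0 \<le> x" "x < int s" unfolding x using pos_mod_sign[OF sp] pos_mod_bound[OF sp] by blast+
    hence "nat x \<in> {0..<s}" "x = int (nat x)" by simp_all
    then show "x \<in> int ` {0..<s}" by (metis imageI)
  qed
next
  show "int ` {0..<s} \<subseteq> (\<lambda>i. (int (u i) - int (v i)) mod int s) ` {0..<s}"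
  proof
    fix y assume "y \<in> int ` {0..<s}"
    then obtain a where a2: "y = int a" and a1: "a \<in> {0..<s}" by (rule imageE)
    have C: "\<forall>u\<in>F. \<forall>v\<in>F. u \<noteq> v \<longrightarrow>
        (\<forall>a\<in>{0..<s}. \<exists>i\<in>{0..<s}. (int (u i) - int (v i)) mod int s = int a)"
      using cov unfolding covering_def by (rule conjunct2)
    have "\<exists>i\<in>{0..<s}. (int (u i) - int (v i)) mod int s = int a"
      using C u v uv a1 by simp
    then obtain i where i1: "i \<in> {0..<s}" and i2: "(int (u i) - int (v i)) mod int s = int a" by (rule bexE)
    show "y \<in> (\<lambda>i. (int (u i) - int (v i)) mod int s) ` {0..<s}"
      by (rule image_eqI[OF _ i1]) (simp add: i2 a2)
  qed
qed

lemma diff_inj: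
  assumes cov: "covering s s F" and s: "s \<ge> 2" and u: "u \<in> F" and v: "v \<in> F" and uv: "u \<noteq> v"
  shows "inj_on (\<lambda>i. (int (u i) - int (v i)) mod int s) {0..<s}"
  apply (rule eq_card_imp_inj_on)
   apply simp
  apply (subst diff_img[OF assms])
  by (simp add: card_image)

lemma card_le_s:
  assumes cov: "covering s s F" and s: "s \<ge> 2"
  shows "card F \<le> s"
proof -
  let ?g = "\<lambda>u. (int (u 1) - int (u 0)) mod int s"
  have inj: "inj_on ?g F"
  proof (rule inj_onI, rule ccontr)
    fix u v assume u: "u \<in> F" and v: "v \<in> F" and eq: "?g u = ?g v" and uv: "u \<noteq> v"
    have "int s dvd (int (u 1) - int (u 0)) - (int (v 1) - int (v 0))"
      using eq by (simp add: mod_eq_dvd_iff)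
    hence "int s dvd (int (u 1) - int (v 1)) - (int (u 0) - int (v 0))"
      by (simp add: algebra_simps)
    hence "(int (u 1) - int (v 1)) mod int s = (int (u 0) - int (v 0)) mod int s"
      by (simp add: mod_eq_dvd_iff)
    moreover have "(1::nat) \<in> {0..<s}" "(0::nat) \<in> {0..<s}" using s by auto
    ultimately show False using diff_inj[OF cov s u v uv] unfolding inj_on_def by force
  qed
  have "?g ` F \<subseteq> {0..<int s}" using s by auto
  hence "card (?g ` F) \<le> s" by (metis card_atLeastLessThan_int card_mono diff_zero finite_atLeastLessThan_int nat_int)
  thus ?thesis using card_image[OF inj] by simp
qed

lemma sum_diff_mod:
  assumes cov: "covering s s F" and s: "s \<ge> 2" and u: "u \<in> F" and v: "v \<in> F" and uv: "u \<noteq> v"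
  shows "int s dvd (\<Sum>i<s. int (u i)) - (\<Sum>i<s. int (v i)) - (\<Sum>i<s. int i)"
proof -
  let ?f = "\<lambda>i. (int (u i) - int (v i)) mod int s"
  have "sum id (?f ` {0..<s}) = sum ?f {0..<s}"
    using sum.reindex[OF diff_inj[OF assms]] by simp
  moreover have "sum id (int ` {0..<s}) = sum int {0..<s}"
    by (simp add: sum.reindex)
  ultimately have e: "sum ?f {0..<s} = sum int {0..<s}" using diff_img[OF assms] by simp
  have "(sum ?f {0..<s}) mod int s = (\<Sum>i\<in>{0..<s}. (int (u i) - int (v i))) mod int s"
    by (simp add: mod_sum_eq)
  also have "(\<Sum>i\<in>{0..<s}. (int (u i) - int (v i))) = (\<Sum>i<s. int (u i)) - (\<Sum>i<s. int (v i))"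
    by (simp add: sum_subtractf lessThan_atLeast0)
  finally have "(sum int {0..<s}) mod int s = ((\<Sum>i<s. int (u i)) - (\<Sum>i<s. int (v i))) mod int s"
    using e by simp
  hence "int s dvd sum int {0..<s} - ((\<Sum>i<s. int (u i)) - (\<Sum>i<s. int (v i)))"
    by (simp add: mod_eq_dvd_iff)
  hence "int s dvd - (sum int {0..<s} - ((\<Sum>i<s. int (u i)) - (\<Sum>i<s. int (v i))))" by (simp only: dvd_minus_iff)
  thus ?thesis by (simp add: lessThan_atLeast0)
qed

lemma gauss2: "2 * (\<Sum>i<n. int i) = int n * (int n - 1)"
  by (induction n) (auto simp: algebra_simps)

lemma card_le_2:
  assumes cov: "covering s s F" and s: "s \<ge> 2" and ev: "even s"
  shows "card F \<le> 2"
proof (rule ccontr)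
  assume "\<not> card F \<le> 2"
  hence "Suc 2 \<le> card F" by simp
  hence "\<exists>a B. F = insert a B \<and> a \<notin> B \<and> 2 \<le> card B \<and> finite B"
    by (simp only: card_le_Suc_iff)
  then obtain u B where B: "F = insert u B" "u \<notin> B" "2 \<le> card B" "finite B"
    by blast
  hence "Suc 1 \<le> card B" by simp
  hence "\<exists>a B'. B = insert a B' \<and> a \<notin> B' \<and> 1 \<le> card B' \<and> finite B'"
    by (simp only: card_le_Suc_iff)
  then obtain v B' where B': "B = insert v B'" "v \<notin> B'" "1 \<le> card B'" "finite B'"
    by blast
  have "B' \<noteq> {}" using B'(3) by auto
  then obtain w where w': "w \<in> B'" by blast
  have u: "u \<in> F" and v: "v \<in> F" and w: "w \<in> F" using B B' w' by auto
  have uv: "u \<noteq> v" and vw: "v \<noteq> w" and uw: "u \<noteq> w" using B B' w' by auto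
  obtain m where m: "s = 2 * m" using ev by blast
  have m1: "m \<ge> 1" using m s by simp
  define T where "T = (\<Sum>i<s. int i)"
  have "2 * T = int s * (int s - 1)" using gauss2[of s] T_def by simp
  hence "2 * T = 2 * (int m * (2 * int m - 1))" using m by simp
  hence T: "T = int m * (2 * int m - 1)" by simp
  have "T - int m = int s * (int m - 1)" using T m by (simp add: algebra_simps)
  hence Tm: "int s dvd T - int m" by simp
  define S where "S = (\<lambda>x. (\<Sum>i<s. int (x i)))"
  have a: "int s dvd S u - S v - int m"
  proof -
    have e: "S u - S v - int m = (S u - S v - T) + (T - int m)" by simp
    show ?thesis unfolding e
      using sum_diff_mod[OF cov s u v uv] Tm unfolding S_def T_def by (rule dvd_add)
  qed
  have b: "int s dvd S v - S w - int m"
  proof -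
    have e: "S v - S w - int m = (S v - S w - T) + (T - int m)" by simp
    show ?thesis unfolding e
      using sum_diff_mod[OF cov s v w vw] Tm unfolding S_def T_def by (rule dvd_add)
  qed
  have c: "int s dvd S u - S w - int m"
  proof -
    have e: "S u - S w - int m = (S u - S w - T) + (T - int m)" by simp
    show ?thesis unfolding e
      using sum_diff_mod[OF cov s u w uw] Tm unfolding S_def T_def by (rule dvd_add)
  qed
  have "int s dvd (S u - S v - int m) + (S v - S w - int m) - (S u - S w - int m)"
    by (rule dvd_diff[OF dvd_add[OF a b] c])
  moreover have "(S u - S v - int m) + (S v - S w - int m) - (S u - S w - int m) = - int m" by simp
  ultimately have "int s dvd - int m" by simp
  hence "int s dvd int m" by (simp only: dvd_minus_iff)
  hence "s dvd m" by simp
  hence "s \<le> m" using m1 by (simp add: dvd_imp_le)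
  thus False using m m1 by simp
qed

lemma construct:
  assumes s: "s \<ge> 2" and ns: "n \<le> s" and cop: "\<And>d. 0 < d \<Longrightarrow> d < n \<Longrightarrow> coprime d s"
  shows "\<exists>F. covering s s F \<and> card F = n"
proof -
  define f where "f = (\<lambda>k::nat. \<lambda>i::nat. if i < s then (k * i) mod s else undefined)"
  define F where "F = f ` {0..<n}"
  have inj: "inj_on f {0..<n}"
  proof (rule inj_onI)
    fix k l assume k: "k \<in> {0..<n}" and l: "l \<in> {0..<n}" and e: "f k = f l"
    have "f k 1 = f l 1" using e by simp
    thus "k = l" using k l s ns by (simp add: f_def)
  qed
  have sub: "F \<subseteq> vecs s s"
    unfolding F_def vecs_def f_def using s by (auto simp: PiE_def extensional_def)
  have cov: "\<forall>u\<in>F. \<forall>v\<in>F. u \<noteq> v \<longrightarrow>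
        (\<forall>a\<in>{0..<s}. \<exists>i\<in>{0..<s}. (int (u i) - int (v i)) mod int s = int a)"
  proof (intro ballI impI)
    fix u v a assume u: "u \<in> F" and v: "v \<in> F" and uv: "u \<noteq> v" and a: "a \<in> {0..<s}"
    obtain k where k: "k < n" "u = f k" using u F_def by auto
    obtain l where l: "l < n" "v = f l" using v F_def by auto
    have kl: "k \<noteq> l" using uv k l by auto
    define d where "d = int k - int l"
    have "0 < nat \<bar>d\<bar>" "nat \<bar>d\<bar> < n" using kl k l d_def by auto
    hence "coprime (nat \<bar>d\<bar>) s" using cop by blast
    hence "coprime (int (nat \<bar>d\<bar>)) (int s)" by simp
    hence "coprime \<bar>d\<bar> (int s)" by simp
    hence "coprime d (int s)" by simp
    then obtain x where x: "[d * x = 1] (mod int s)" using cong_solve_coprime_int by blast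
    define i where "i = nat ((int a * x) mod int s)"
    have i0: "int i = (int a * x) mod int s" unfolding i_def using s by simp
    have iS: "i < s" proof -
      have "(int a * x) mod int s < int s" using s by simp
      thus ?thesis using i0 by linarith
    qed
    have "(int (u i) - int (v i)) mod int s = (int ((k*i) mod s) - int ((l*i) mod s)) mod int s"
      using k l iS f_def by simp
    also have "\<dots> = (int k * int i - int l * int i) mod int s"
      by (simp add: zmod_int mod_diff_eq)
    also have "\<dots> = (d * int i) mod int s" by (simp add: d_def algebra_simps)
    also have "\<dots> = (d * (int a * x)) mod int s" using i0 by (simp add: mod_mult_right_eq)
    also have "\<dots> = ((d * x) * int a) mod int s" by (simp add: algebra_simps)
    also have "\<dots> = (1 * int a) mod int s" using x unfolding cong_def by (metis mod_mult_left_eq)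
    also have "\<dots> = int a" using a by simp
    finally show "\<exists>i\<in>{0..<s}. (int (u i) - int (v i)) mod int s = int a" using iS by auto
  qed
  have "covering s s F" using sub cov unfolding covering_def by blast
  moreover have "card F = n" using inj F_def by (simp add: card_image)
  ultimately show ?thesis by blast
qed

theorem proposition4p1:
  fixes s :: nat
  assumes "s \<ge> 2"
  shows "R s s \<le> s \<and> Min (prime_factors s) \<le> R s s \<and> (even s \<longrightarrow> R s s = 2)"
proof -
  define C where "C = {card F | F. covering s s F}"
  have Rdef: "R s s = Max C" unfolding R_def C_def by simp
  have Csub: "C \<subseteq> {0..s}"
  proof
    fix x assume "x \<in> C"
    then obtain F where "x = card F" "covering s s F" unfolding C_def by blast
    thus "x \<in> {0..s}" using card_le_s[OF _ assms] by simp
  qed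
  hence fin: "finite C" by (rule finite_subset) simp
  have "covering s s {}" by (simp add: covering_def)
  hence "card {} \<in> C" unfolding C_def by (intro CollectI exI[of _ "{}"]) simp
  hence ne: "C \<noteq> {}" by blast
  have ge: "n \<le> R s s" if h: "\<exists>F. covering s s F \<and> card F = n" for n
  proof -
    obtain F where "covering s s F" "card F = n" using h by blast
    hence "n \<in> C" unfolding C_def by (intro CollectI exI[of _ F]) simp
    thus ?thesis unfolding Rdef by (rule Max_ge[OF fin])
  qed
  have A: "R s s \<le> s" unfolding Rdef
  proof (rule Max.boundedI[OF fin ne])
    fix a assume "a \<in> C" thus "a \<le> s" using Csub by auto
  qed
  define p where "p = Min (prime_factors s)"
  have pfin: "finite (prime_factors s)" by simp
  have s0: "s \<noteq> 0" "s \<noteq> 1" using assms by simp_all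
  obtain q0 where q0: "prime q0" "q0 dvd s" using prime_factor_nat[OF s0(2)] by blast
  have "q0 \<in> prime_factors s" using q0 s0 by (simp add: prime_factors_dvd)
  hence pne: "prime_factors s \<noteq> {}" by blast
  have pin: "p \<in> prime_factors s" unfolding p_def using pfin pne by (rule Min_in)
  hence "p dvd s" by (rule in_prime_factors_imp_dvd)
  hence ps: "p \<le> s" using s0 by (simp add: dvd_imp_le)
  have cop: "coprime d s" if d: "0 < d" "d < p" for d
  proof (rule ccontr)
    assume nc: "\<not> coprime d s"
    have "gcd d s \<noteq> 1" using nc by (metis coprime_iff_gcd_eq_1)
    then obtain q where q: "prime q" "q dvd gcd d s" using prime_factor_nat by blast
    have qd1: "q dvd d" by (rule dvd_trans[OF q(2) gcd_dvd1])
    have qd2: "q dvd s" by (rule dvd_trans[OF q(2) gcd_dvd2])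
    have "q \<in> prime_factors s" using q(1) qd2 s0 by (simp add: prime_factors_dvd)
    hence "p \<le> q" unfolding p_def by (rule Min_le[OF pfin])
    moreover have "q \<le> d" by (rule dvd_imp_le[OF qd1 d(1)])
    ultimately show False using d by simp
  qed
  have B: "p \<le> R s s" using ge construct[OF assms ps cop] by blast
  have C2: "R s s = 2" if ev: "even s"
  proof -
    have "R s s \<le> 2" unfolding Rdef
    proof (rule Max.boundedI[OF fin ne])
      fix a assume "a \<in> C"
      then obtain F where "a = card F" "covering s s F" unfolding C_def by blast
      thus "a \<le> 2" using card_le_2[OF _ assms ev] by simp
    qed
    moreover have "2 \<le> R s s"
    proof -
      have "coprime d s" if "0 < d" "d < 2" for d :: nat
      proof -
        have "d = 1" using that by simp
        thus ?thesis by simp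
      qed
      thus ?thesis using ge construct[OF assms assms] by blast
    qed
    ultimately show ?thesis by simp
  qed
  show ?thesis using A B C2 p_def by blast
qed

end
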